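(* Let $f:\mathbb{R}^n\to\mathbb{R}$ and $c:\mathbb{R}^n\to\mathbb{R}^m$ ($m<n$) be smooth, with $g=\nabla f$ and Jacobian $J=\nabla c$. Suppose noisy evaluations satisfy, for all $x$, $|\tilde f(x)-f(x)|\le\epsilon_f$, $\|\tilde c(x)-c(x)\|_1\le\epsilon_c$, $\|\tilde g(x)-g(x)\|\le\epsilon_g$, $\|\tilde J(x)-J(x)\|_{1,2}\le\epsilon_J$. Let $\{x_k\}$ be a sequence with $\sigma_{\min}(J_k)\ge\gamma>\epsilon_J$ for all $k$; set $\delta=1/(\gamma-\epsilon_J)$, $\eta=1/\gamma$. For $\beta_k>0$ let $d_k$ solve $\min_d\tfrac12\beta_k\|d\|^2+\tilde g_k^Td$ s.t. $\tilde c_k+\tilde J_kd=0$; fix $\tau\in(0,1)$ and suppose $\pi_k\ge\frac{1}{1-\tau}\|(\tilde J_k\tilde J_k^T)^{-1}\tilde J_k\tilde g_k\|_\infty$ for every $k$. Define, for $x\in\mathbb{R}^n$, $\beta>0$, $\pi>0$, $$E(x,\beta,\pi)=\frac{1}{\beta}\big(\|g(x)\|^2\eta\epsilon_J+\epsilon_g\|g(x)\|\big)+\epsilon_g\delta(\|c(x)\|_1+\epsilon_c)+\pi\Big[(2-\tau)\epsilon_c+\epsilon_J\Big(\delta(\|c(x)\|_1+\epsilon_c)+\frac{1}{\beta}\big(\|P(x)g(x)\|+\|g(x)\|\eta\epsilon_J+\epsilon_g\big)\Big)\Big].$$ Choose any $\theta_1\in[0,1)$. For any $x_k$ such that $$(1-\theta_1)\Big(\frac{1}{\beta_k}g_k^TP_kg_k+\tau\pi_k\|c_k\|_1\Big)\ge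 E(x_k,\beta_k,\pi_k),$$ we have $$\ell(x_k;d_k)\le-\theta_1\Big(\frac{1}{\beta_k}g_k^TP_kg_k+\tau\pi_k\|c_k\|_1\Big),$$ where $\ell(x_k;d_k)=g_k^Td_k+\pi_k\|c_k+J_kd_k\|_1-\pi_k\|c_k\|_1$.
   Context: $\|\cdot\|$ is the Euclidean norm; $\|A\|_{1,2}=\sup_{x\ne0}\|Ax\|_1/\|x\|$; $\sigma_{\min}$ is the smallest singular value. Subscript $k$ denotes evaluation at $x_k$. $P(x)=I-J(x)^T(J(x)J(x)^T)^{-1}J(x)$ and $P_k=P(x_k)$. *)

theory Defs
  imports "HOL-Analysis.Analysis"
begin

definition l1norm :: "real ^ 'm \<Rightarrow> real" where
  "l1norm v = (\<Sum>i\<in>UNIV. \<bar>v $ i\<bar>)"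

definition opnorm12 :: "real ^ 'n ^ 'm \<Rightarrow> real" where
  "opnorm12 A = Sup {l1norm (A *v x) / norm x | x. x \<noteq> 0}"

text \<open>Smallest singular value of an m x n matrix with m \<le> n
  (the m singular values of J are those of its transpose, a tall matrix):
  the minimum of the Euclidean norm of J^T y over unit vectors y.\<close>
definition sigma_min :: "real ^ 'n ^ 'm \<Rightarrow> real" where
  "sigma_min J = Inf {norm (transpose J *v y) | y. norm y = 1}"

definition Pmat :: "real ^ 'n ^ 'm \<Rightarrow> real ^ 'n ^ 'n" where
  "Pmat J = mat 1 - transpose J ** matrix_inv (J ** transpose J) ** J"

end

theory Submission
  imports Defs
begin


lemma tr_dot: "(transpose (A::real^'n^'m) *v y) \<bullet> x = y \<bullet> (A *v x)"
  by (simp add: transpose_matrix_vector dot_lmul_matrix)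

lemma tr_dot2: "x \<bullet> (transpose (A::real^'n^'m) *v y) = (A *v x) \<bullet> y"
  by (metis tr_dot inner_commute)

lemma transpose_diff: "transpose (A - B) = transpose A - transpose (B::'a::ab_group_add^'n^'m)"
  by (simp add: transpose_def vec_eq_iff)

lemma transpose_sym_prod: "transpose ((A::real^'n^'m) ** transpose A) = A ** transpose A"
  by (simp add: matrix_transpose_mul)

lemma inv_right: "invertible M \<Longrightarrow> M ** matrix_inv M = mat 1"
  unfolding invertible_def matrix_inv_def by (rule someI2_ex) auto

lemma inv_ker: "(\<And>x. (M::real^'m^'m) *v x = 0 \<Longrightarrow> x = 0) \<Longrightarrow> invertible M"
  using invertible_left_inverse matrix_left_invertible_ker by blast

lemma inv_app: "invertible M \<Longrightarrow> M *v (matrix_inv M *v b) = b"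
  by (simp add: matrix_vector_mul_assoc inv_right)

lemma l1_nonneg: "0 \<le> l1norm v" unfolding l1norm_def by (simp add: sum_nonneg)
lemma l1_add: "l1norm (a + b) \<le> l1norm a + l1norm b"
  unfolding l1norm_def by (simp add: sum.distrib[symmetric] sum_mono abs_triangle_ineq)
lemma l1_minus: "l1norm (- a) = l1norm a" unfolding l1norm_def by simp
lemma l1_commute: "l1norm (a - b) = l1norm (b - a)"
  by (metis l1_minus minus_diff_eq)
lemma norm_le_l1: "norm v \<le> l1norm v" unfolding l1norm_def by (rule norm_le_l1_cart)
lemma dot_infnorm: "\<bar>lam \<bullet> v\<bar> \<le> infnorm lam * l1norm v"
proof -
  have "\<bar>lam \<bullet> v\<bar> = \<bar>\<Sum>i\<in>UNIV. lam $ i * v $ i\<bar>" by (simp add: inner_vec_def)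
  also have "\<dots> \<le> (\<Sum>i\<in>UNIV. \<bar>lam $ i\<bar> * \<bar>v $ i\<bar>)"
    by (metis (no_types, lifting) abs_mult sum_abs sum.cong)
  also have "\<dots> \<le> (\<Sum>i\<in>UNIV. infnorm lam * \<bar>v $ i\<bar>)"
    by (intro sum_mono mult_right_mono component_le_infnorm_cart) auto
  finally show ?thesis by (simp add: l1norm_def sum_distrib_left)
qed

lemma opnorm_bound:
  fixes D :: "real^'n^'m"
  assumes "opnorm12 D \<le> e"
  shows "l1norm (D *v v) \<le> e * norm v"
proof (cases "v = 0")
  case True then show ?thesis by (simp add: l1norm_def)
next
  case False
  define B where "B = (\<Sum>i\<in>UNIV. \<Sum>j\<in>UNIV. \<bar>D $ i $ j\<bar>)"
  have lb: "l1norm (D *v x) \<le> B * norm x" for x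
  proof -
    have "l1norm (D *v x) = (\<Sum>i\<in>UNIV. \<bar>\<Sum>j\<in>UNIV. D $ i $ j * x $ j\<bar>)"
      by (simp add: l1norm_def matrix_vector_mult_def)
    also have "\<dots> \<le> (\<Sum>i\<in>UNIV. \<Sum>j\<in>UNIV. \<bar>D $ i $ j\<bar> * norm x)"
    proof (intro sum_mono)
      fix i
      have "\<bar>\<Sum>j\<in>UNIV. D $ i $ j * x $ j\<bar> \<le> (\<Sum>j\<in>UNIV. \<bar>D $ i $ j * x $ j\<bar>)" by (rule sum_abs)
      also have "\<dots> \<le> (\<Sum>j\<in>UNIV. \<bar>D $ i $ j\<bar> * norm x)"
        by (intro sum_mono) (simp add: abs_mult mult_left_mono component_le_norm_cart)
      finally show "\<bar>\<Sum>j\<in>UNIV. D $ i $ j * x $ j\<bar> \<le> (\<Sum>j\<in>UNIV. \<bar>D $ i $ j\<bar> * norm x)" .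
    qed
    finally show ?thesis by (simp add: B_def sum_distrib_right)
  qed
  have bdd: "bdd_above {l1norm (D *v x) / norm x | x. x \<noteq> 0}"
    unfolding bdd_above_def
    by (rule exI[of _ B]) (auto simp: divide_le_eq lb)
  have "l1norm (D *v v) / norm v \<le> opnorm12 D"
    unfolding opnorm12_def by (rule cSup_upper[OF _ bdd]) (use False in auto)
  then have "l1norm (D *v v) / norm v \<le> e" using assms by linarith
  then show ?thesis using False by (simp add: divide_le_eq mult.commute)
qed

lemma opnorm_nonneg:
  fixes D :: "real^'n^'m"
  assumes "opnorm12 D \<le> e" shows "0 \<le> e"
proof -
  obtain i :: 'n where True by simp
  define v :: "real^'n" where "v = axis i 1"
  have "norm v = 1" by (simp add: v_def norm_axis_1)
  then show ?thesis using opnorm_bound[OF assms, of v] l1_nonneg[of "D *v v"] by simp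
qed

lemma tr_bound:
  fixes A :: "real^'n^'m"
  assumes "\<And>v. norm (A *v v) \<le> e * norm v" "0 \<le> e"
  shows "norm (transpose A *v y) \<le> e * norm y"
proof -
  let ?w = "transpose A *v y"
  have "(norm ?w)\<^sup>2 = y \<bullet> (A *v ?w)" by (simp add: power2_norm_eq_inner dot_lmul_matrix)
  also have "\<dots> \<le> norm y * norm (A *v ?w)" by (rule norm_cauchy_schwarz)
  also have "\<dots> \<le> norm y * (e * norm ?w)" by (simp add: assms(1) mult_left_mono)
  finally have *: "(norm ?w)\<^sup>2 \<le> (e * norm y) * norm ?w" by (simp add: algebra_simps)
  show ?thesis
  proof (cases "norm ?w = 0")
    case True then show ?thesis using assms(2) by simp
  next
    case False
    then have "norm ?w > 0" by simp
    with * show ?thesis by (simp add: power2_eq_square)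
  qed
qed

lemma sigma_bound:
  fixes A :: "real^'n^'m"
  assumes "sigma_min A \<ge> gamma"
  shows "gamma * norm y \<le> norm (transpose A *v y)"
proof (cases "y = 0")
  case True then show ?thesis by simp
next
  case False
  define y' where "y' = (1 / norm y) *\<^sub>R y"
  have n1: "norm y' = 1" using False by (simp add: y'_def)
  have "sigma_min A \<le> norm (transpose A *v y')"
    unfolding sigma_min_def
    by (rule cInf_lower) (use n1 in \<open>auto intro: bdd_belowI[of _ 0]\<close>)
  also have "\<dots> = norm (transpose A *v y) / norm y"
    by (simp add: y'_def matrix_vector_mult_scaleR)
  finally have "sigma_min A * norm y \<le> norm (transpose A *v y)" using False by (simp add: le_divide_eq mult.commute)
  moreover have "gamma * norm y \<le> sigma_min A * norm y" using assms by (simp add: mult_right_mono)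
  ultimately show ?thesis by linarith
qed

lemma lower_invertible:
  fixes A :: "real^'n^'m"
  assumes "\<And>y. k * norm y \<le> norm (transpose A *v y)" "k > 0"
  shows "invertible (A ** transpose A)"
proof (rule inv_ker)
  fix y assume "(A ** transpose A) *v y = 0"
  then have "y \<bullet> (A *v (transpose A *v y)) = 0" by (metis matrix_vector_mul_assoc inner_zero_right)
  then have "(transpose A *v y) \<bullet> (transpose A *v y) = 0" by (simp add: dot_lmul_matrix)
  then have "norm (transpose A *v y) = 0" by simp
  with assms(1)[of y] assms(2) show "y = 0"
    by (metis mult_le_0_iff norm_eq_zero norm_ge_zero order_antisym_conv not_le)
qed

lemma range_bound:
  fixes A :: "real^'n^'m"
  assumes "\<And>y. k * norm y \<le> norm (transpose A *v y)" "k > 0"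
    and "A *v (transpose A *v y) = b"
  shows "k * norm (transpose A *v y) \<le> norm b"
proof -
  let ?w = "transpose A *v y"
  have "(norm ?w)\<^sup>2 = y \<bullet> b" using assms(3) by (simp add: power2_norm_eq_inner dot_lmul_matrix)
  also have "\<dots> \<le> norm y * norm b" by (rule norm_cauchy_schwarz)
  finally have "k * (norm ?w)\<^sup>2 \<le> (k * norm y) * norm b" using assms(2) by (simp add: mult_left_mono)
  also have "\<dots> \<le> norm ?w * norm b" by (rule mult_right_mono[OF assms(1)]) simp
  finally have *: "k * (norm ?w)\<^sup>2 \<le> norm ?w * norm b" .
  show ?thesis
  proof (cases "norm ?w = 0")
    case True then show ?thesis using assms(2) by simp
  next
    case False
    then have "norm ?w > 0" by simp
    with * show ?thesis by (simp add: power2_eq_square)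
  qed
qed



definition prj :: "real^'n^'m \<Rightarrow> real^'n \<Rightarrow> real^'n" where
  "prj A v = v - transpose A *v (matrix_inv (A ** transpose A) *v (A *v v))"

lemma inv_left: "invertible M \<Longrightarrow> matrix_inv M ** M = mat 1"
  unfolding invertible_def matrix_inv_def by (rule someI2_ex) auto

lemma prj_A: assumes "invertible (A ** transpose A)" shows "A *v prj A v = 0"
proof -
  have "A *v (transpose A *v (matrix_inv (A ** transpose A) *v (A *v v))) = A *v v"
    by (metis inv_app[OF assms] matrix_vector_mul_assoc)
  then show ?thesis by (simp add: prj_def matrix_vector_mult_diff_distrib)
qed

lemma prj_orth: assumes "invertible (A ** transpose A)"
  shows "prj A v \<bullet> (transpose A *v y) = 0"
  using prj_A[OF assms] by (metis tr_dot2 inner_zero_left)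

lemma prj_sym: assumes "invertible (A ** transpose A)"
  shows "u \<bullet> prj A v = prj A u \<bullet> prj A v"
proof -
  define y where "y = matrix_inv (A ** transpose A) *v (A *v u)"
  have "u = prj A u + transpose A *v y" by (simp add: prj_def y_def)
  then have "u \<bullet> prj A v = prj A u \<bullet> prj A v + (transpose A *v y) \<bullet> prj A v"
    by (metis inner_add_left)
  then show ?thesis using prj_orth[OF assms] by (simp add: inner_commute)
qed

lemma prj_null: "A *v e = 0 \<Longrightarrow> prj A e = e"
  by (simp add: prj_def)

lemma prj_tr: assumes "invertible (A ** transpose A)" shows "prj A (transpose A *v y) = 0"
proof -
  have "A *v (transpose A *v y) = (A ** transpose A) *v y" by (metis matrix_vector_mul_assoc)
  then have "matrix_inv (A ** transpose A) *v (A *v (transpose A *v y)) = y"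
    using inv_left[OF assms] by (metis matrix_vector_mul_assoc matrix_vector_mul_lid)
  then show ?thesis by (simp add: prj_def)
qed

lemma prj_diff: "prj A (u - w) = prj A u - prj A w"
  by (simp add: prj_def matrix_vector_mult_diff_distrib)

lemma prj_add: "prj A (u + w) = prj A u + prj A w"
  by (simp add: prj_def matrix_vector_right_distrib)

lemma prj_sq: assumes "invertible (A ** transpose A)" shows "u \<bullet> prj A u = (norm (prj A u))\<^sup>2"
  using prj_sym[OF assms] by (simp add: power2_norm_eq_inner)

lemma prj_decomp: "u = prj A u + transpose A *v (matrix_inv (A ** transpose A) *v (A *v u))"
  by (simp add: prj_def)

lemma prj_pyth: assumes "invertible (A ** transpose A)"
  shows "(norm u)\<^sup>2 = (norm (prj A u))\<^sup>2 + (norm (transpose A *v (matrix_inv (A ** transpose A) *v (A *v u))))\<^sup>2"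
proof -
  let ?w = "transpose A *v (matrix_inv (A ** transpose A) *v (A *v u))"
  have "u = prj A u + ?w" by (rule prj_decomp)
  have o: "prj A u \<bullet> ?w = 0" by (rule prj_orth[OF assms])
  then have o2: "?w \<bullet> prj A u = 0" by (simp add: inner_commute)
  have "(norm u)\<^sup>2 = (norm (prj A u + ?w))\<^sup>2" using \<open>u = prj A u + ?w\<close> by simp
  also have "\<dots> = (norm (prj A u))\<^sup>2 + (norm ?w)\<^sup>2"
    unfolding power2_norm_eq_inner inner_add_left inner_add_right o o2 by simp
  finally show ?thesis .
qed

lemma prj_le: assumes "invertible (A ** transpose A)" shows "norm (prj A u) \<le> norm u"
  using prj_pyth[OF assms, of u]
  by (metis le_add_same_cancel1 norm_ge_zero power2_le_imp_le zero_le_power2)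

lemma Pmat_prj: "Pmat A *v u = prj A u"
  by (simp add: Pmat_def prj_def matrix_vector_mult_diff_rdistrib matrix_vector_mul_assoc matrix_mul_assoc)



lemma real_key:
  fixes p N a b r s :: real
  assumes nn: "0 \<le> p" "0 \<le> N" "0 \<le> a" "0 \<le> b" "0 \<le> r" "0 \<le> s" "s < 1"
    and NN: "N\<^sup>2 = a\<^sup>2 + r\<^sup>2" and rs: "r \<le> s * N" and pN: "a\<^sup>2 - b * r \<le> p * N"
  shows "a\<^sup>2 - s * (a\<^sup>2 + b\<^sup>2) \<le> p\<^sup>2"
proof -
  define x where "x = sqrt (1 - s)"
  define y where "y = sqrt (1 + s)"
  define c where "c = x * y"
  have x2: "x\<^sup>2 = 1 - s" using nn by (simp add: x_def)
  have y2: "y\<^sup>2 = 1 + s" using nn by (simp add: y_def)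
  have c0: "0 \<le> c" using nn by (simp add: c_def x_def y_def)
  have "c\<^sup>2 = x\<^sup>2 * y\<^sup>2" by (simp add: c_def power_mult_distrib)
  also have "\<dots> = (1 - s) * (1 + s)" by (simp add: x2 y2)
  finally have c2: "c\<^sup>2 = 1 - s\<^sup>2" by (simp add: algebra_simps power2_eq_square)
  have "r\<^sup>2 \<le> (s * N)\<^sup>2" using rs nn by (simp add: power_mono)
  moreover have "(c * N)\<^sup>2 = N\<^sup>2 - (s * N)\<^sup>2" by (simp add: power_mult_distrib c2 algebra_simps)
  ultimately have "(c * N)\<^sup>2 \<le> a\<^sup>2" using NN by linarith
  then have aN: "c * N \<le> a" using nn by (meson power2_le_imp_le)
  have "(c * a - s * b) * N \<le> a\<^sup>2 - b * r"
  proof -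
    have "0 \<le> a * (a - c * N)" using aN nn by simp
    moreover have "0 \<le> b * (s * N - r)" using rs nn by simp
    ultimately show ?thesis by (simp add: algebra_simps power2_eq_square)
  qed
  with pN have key: "(c * a - s * b) * N \<le> p * N" by linarith
  show ?thesis
  proof (cases "N = 0")
    case True
    then have "a = 0" using NN by (metis add_nonneg_eq_0_iff power_zero_numeral zero_le_power2 power_eq_0_iff zero_neq_numeral)
    then have e: "a\<^sup>2 - s * (a\<^sup>2 + b\<^sup>2) = - (s * b\<^sup>2)" by simp
    have "0 \<le> s * b\<^sup>2" using nn by simp
    moreover have "0 \<le> p\<^sup>2" by simp
    ultimately show ?thesis unfolding e by linarith
  next
    case False
    then have "N > 0" using nn by simp
    with key have cp: "c * a - s * b \<le> p" by simp
    show ?thesis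
    proof (cases "0 \<le> c * a - s * b")
      case True
      have "(c * a - s * b)\<^sup>2 \<le> p\<^sup>2" using True cp by (simp add: power_mono)
      moreover have "a\<^sup>2 - s * (a\<^sup>2 + b\<^sup>2) \<le> (c * a - s * b)\<^sup>2"
      proof -
        have "0 \<le> s * (x * a - y * b)\<^sup>2" using nn by simp
        also have "s * (x * a - y * b)\<^sup>2 = s * (x\<^sup>2 * a\<^sup>2 - 2 * c * a * b + y\<^sup>2 * b\<^sup>2)"
          by (simp add: c_def power2_eq_square algebra_simps)
        also have "\<dots> = s * ((1 - s) * a\<^sup>2 - 2 * c * a * b + (1 + s) * b\<^sup>2)"
          by (simp only: x2 y2)
        also have "\<dots> = c\<^sup>2 * a\<^sup>2 + s\<^sup>2 * b\<^sup>2 - 2 * c * a * s * b - (a\<^sup>2 - s * (a\<^sup>2 + b\<^sup>2))"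
          unfolding c2 by (simp add: power2_eq_square algebra_simps)
        also have "\<dots> = (c * a - s * b)\<^sup>2 - (a\<^sup>2 - s * (a\<^sup>2 + b\<^sup>2))"
          by (simp add: power2_diff power_mult_distrib algebra_simps)
        finally show ?thesis by simp
      qed
      ultimately show ?thesis by linarith
    next
      case False
      then have "c * a < s * b" by simp
      then have "(c * a)\<^sup>2 < (s * b)\<^sup>2" using c0 nn by (simp add: power_strict_mono)
      then have "(1 - s\<^sup>2) * a\<^sup>2 < s\<^sup>2 * b\<^sup>2" by (simp add: power_mult_distrib c2)
      moreover have "s\<^sup>2 * b\<^sup>2 \<le> s * (1 + s) * b\<^sup>2"
      proof (rule mult_right_mono)
        show "s\<^sup>2 \<le> s * (1 + s)" using nn by (simp add: power2_eq_square algebra_simps)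
      qed simp
      ultimately have "(1 + s) * ((1 - s) * a\<^sup>2) < (1 + s) * (s * b\<^sup>2)"
        by (simp add: power2_eq_square algebra_simps)
      then have "(1 - s) * a\<^sup>2 < s * b\<^sup>2" using nn by (simp add: mult_less_cancel_left)
      then have "a\<^sup>2 - s * (a\<^sup>2 + b\<^sup>2) < 0" by (simp add: algebra_simps)
      then show ?thesis by (metis less_le_trans zero_le_power2 less_imp_le)
    qed
  qed
qed



lemma proj_perturb:
  fixes J Jt :: "real^'n^'m" and g :: "real^'n"
  assumes gam: "gamma > 0" and sJ: "\<And>y. gamma * norm y \<le> norm (transpose J *v y)"
    and invJ: "invertible (J ** transpose J)" and invJt: "invertible (Jt ** transpose Jt)"
    and D: "\<And>v. norm ((J - Jt) *v v) \<le> e * norm v" and e0: "0 \<le> e" and s1: "e / gamma < 1"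
  shows "g \<bullet> prj J g - g \<bullet> prj Jt g \<le> (e / gamma) * (norm g)\<^sup>2"
proof -
  define s where "s = e / gamma"
  have s0: "0 \<le> s" using e0 gam by (simp add: s_def)
  have KL: "norm (transpose J *v z) \<le> s * norm (a + transpose J *v z)"
    if Ja: "J *v a = 0" and Jtv: "Jt *v (a + transpose J *v z) = 0" for a z
  proof -
    define w where "w = transpose J *v z"
    define v where "v = a + w"
    have "Jt *v v = 0" using Jtv by (simp add: v_def w_def)
    then have "(J - Jt) *v v = J *v v" by (simp add: matrix_vector_mult_diff_rdistrib)
    also have "\<dots> = J *v w" using Ja by (simp add: v_def matrix_vector_right_distrib)
    finally have "(J - Jt) *v v = J *v w" .
    have "(norm w)\<^sup>2 = z \<bullet> (J *v w)" by (simp add: w_def power2_norm_eq_inner dot_lmul_matrix)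
    also have "\<dots> \<le> norm z * norm (J *v w)" by (rule norm_cauchy_schwarz)
    also have "\<dots> \<le> norm z * (e * norm v)"
      using D[of v] \<open>(J - Jt) *v v = J *v w\<close> by (simp add: mult_left_mono)
    finally have 1: "(norm w)\<^sup>2 \<le> norm z * (e * norm v)" .
    have "gamma * (norm w)\<^sup>2 \<le> (gamma * norm z) * (e * norm v)"
      using 1 gam by (metis mult.assoc mult_left_mono less_imp_le)
    also have "\<dots> \<le> norm w * (e * norm v)"
      by (rule mult_right_mono) (use sJ[of z] e0 in \<open>simp_all add: w_def\<close>)
    finally have 2: "gamma * (norm w)\<^sup>2 \<le> norm w * (e * norm v)" .
    show ?thesis
    proof (cases "norm w = 0")
      case True then show ?thesis using s0 by (simp add: w_def)
    next
      case False
      then have "norm w > 0" by simp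
      with 2 have "gamma * norm w \<le> e * norm v" by (simp add: power2_eq_square)
      then show ?thesis using gam by (simp add: s_def w_def v_def field_simps)
    qed
  qed
  have invM: "invertible (Jt ** transpose J)"
  proof (rule inv_ker)
    fix z assume "(Jt ** transpose J) *v z = 0"
    then have "Jt *v (0 + transpose J *v z) = 0" by (metis matrix_vector_mul_assoc add_0)
    then have "norm (transpose J *v z) \<le> s * norm (0 + transpose J *v z)" using KL[of 0 z] by simp
    then have "norm (transpose J *v z) = 0" using s1 s0 unfolding s_def
      by (metis add_0 mult_le_cancel_right1 norm_ge_zero not_le antisym s_def)
    then have "gamma * norm z \<le> 0" using sJ[of z] by simp
    then show "z = 0" using gam by (simp add: mult_le_0_iff)
  qed
  define a where "a = prj J g"
  define y0 where "y0 = matrix_inv (J ** transpose J) *v (J *v g)"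
  define b where "b = transpose J *v y0"
  have gab: "g = a + b" unfolding a_def b_def y0_def by (rule prj_decomp)
  define z where "z = - (matrix_inv (Jt ** transpose J) *v (Jt *v a))"
  define w where "w = transpose J *v z"
  define v where "v = a + w"
  have Ja: "J *v a = 0" unfolding a_def by (rule prj_A[OF invJ])
  have Jtv: "Jt *v v = 0"
  proof -
    have "Jt *v w = (Jt ** transpose J) *v z" unfolding w_def by (rule matrix_vector_mul_assoc)
    also have "\<dots> = - (Jt *v a)" by (simp add: z_def vec.neg inv_app[OF invM])
    finally show ?thesis by (simp add: v_def matrix_vector_right_distrib)
  qed
  have rs: "norm w \<le> s * norm v" using KL[OF Ja, of z] Jtv by (simp add: v_def w_def)
  have aw: "a \<bullet> w = 0" unfolding a_def w_def by (rule prj_orth[OF invJ])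
  have ab: "a \<bullet> b = 0" unfolding a_def b_def by (rule prj_orth[OF invJ])
  have NN: "(norm v)\<^sup>2 = (norm a)\<^sup>2 + (norm w)\<^sup>2"
    using aw by (simp add: v_def power2_norm_eq_inner inner_add_left inner_add_right inner_commute)
  have gg: "(norm g)\<^sup>2 = (norm a)\<^sup>2 + (norm b)\<^sup>2"
    using prj_pyth[OF invJ, of g] by (simp add: a_def b_def y0_def)
  have gv: "g \<bullet> v = (norm a)\<^sup>2 + b \<bullet> w"
    using aw ab by (simp add: gab v_def power2_norm_eq_inner inner_add_left inner_add_right inner_commute)
  have "b \<bullet> w \<ge> - (norm b * norm w)"
    using norm_cauchy_schwarz[of "-b" w] by simp
  define p where "p = norm (prj Jt g)"
  have "g \<bullet> v = prj Jt g \<bullet> v"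
    using prj_sym[OF invJt, of g v] prj_null[OF Jtv] by simp
  also have "\<dots> \<le> p * norm v" unfolding p_def by (rule norm_cauchy_schwarz)
  finally have pN: "(norm a)\<^sup>2 - norm b * norm w \<le> p * norm v"
    using gv \<open>b \<bullet> w \<ge> - (norm b * norm w)\<close> by linarith
  have "(norm a)\<^sup>2 - s * ((norm a)\<^sup>2 + (norm b)\<^sup>2) \<le> p\<^sup>2"
    by (rule real_key[OF _ _ _ _ _ s0 _ NN rs pN]) (use s1 in \<open>simp_all add: p_def s_def\<close>)
  moreover have "g \<bullet> prj J g = (norm a)\<^sup>2" unfolding a_def by (rule prj_sq[OF invJ])
  moreover have "g \<bullet> prj Jt g = p\<^sup>2" unfolding p_def by (rule prj_sq[OF invJt])
  ultimately show ?thesis using gg by (simp add: s_def)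
qed



lemma stationary:
  fixes d gt e :: "real^'n"
  assumes b: "b > 0"
    and opt: "\<And>t::real. 1/2 * b * (norm d)\<^sup>2 + gt \<bullet> d \<le> 1/2 * b * (norm (d + t *\<^sub>R e))\<^sup>2 + gt \<bullet> (d + t *\<^sub>R e)"
  shows "(b *\<^sub>R d + gt) \<bullet> e = 0"
proof -
  define A where "A = (b *\<^sub>R d + gt) \<bullet> e"
  define Q where "Q = 1/2 * b * (norm e)\<^sup>2"
  have Q0: "0 \<le> Q" using b by (simp add: Q_def)
  have ineq: "0 \<le> t * A + t\<^sup>2 * Q" for t
  proof -
    have "(norm (d + t *\<^sub>R e))\<^sup>2 = (norm d)\<^sup>2 + 2 * t * (d \<bullet> e) + t\<^sup>2 * (norm e)\<^sup>2"
      unfolding power2_norm_eq_inner by (simp add: inner_add_left inner_add_right inner_commute algebra_simps power2_eq_square)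
    then show ?thesis using opt[of t] by (simp add: A_def Q_def inner_add_left inner_add_right algebra_simps)
  qed
  define t where "t = - A / (Q + 1)"
  have "0 \<le> t * A + t\<^sup>2 * Q" by (rule ineq)
  then have "0 \<le> (t * A + t\<^sup>2 * Q) * (Q + 1)\<^sup>2" using Q0 by simp
  also have "\<dots> = A * (t * (Q + 1)) * (Q + 1) + Q * (t * (Q + 1))\<^sup>2"
    by (simp add: power2_eq_square algebra_simps)
  also have "t * (Q + 1) = - A" using Q0 by (simp add: t_def)
  also have "A * (- A) * (Q + 1) + Q * (- A)\<^sup>2 = - A\<^sup>2 * (Q + 1) + A\<^sup>2 * Q"
    by (simp add: power2_eq_square algebra_simps)
  also have "\<dots> = - A\<^sup>2" by (simp add: algebra_simps)
  finally have "A\<^sup>2 \<le> 0" by simp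
  then show ?thesis unfolding A_def by simp
qed



theorem corollary3p1:
  fixes f :: "real ^ 'n \<Rightarrow> real" and c :: "real ^ 'n \<Rightarrow> real ^ 'm"
    and g :: "real ^ 'n \<Rightarrow> real ^ 'n" and J :: "real ^ 'n \<Rightarrow> real ^ 'n ^ 'm"
    and ft :: "real ^ 'n \<Rightarrow> real" and ct :: "real ^ 'n \<Rightarrow> real ^ 'm"
    and gt :: "real ^ 'n \<Rightarrow> real ^ 'n" and Jt :: "real ^ 'n \<Rightarrow> real ^ 'n ^ 'm"
    and eps_f eps_c eps_g eps_J gamma tau theta1 :: real
    and x :: "nat \<Rightarrow> real ^ 'n" and beta pi :: "nat \<Rightarrow> real"
    and d :: "nat \<Rightarrow> real ^ 'n" and k :: nat
  assumes dims: "CARD('m) < CARD('n)"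
    and f_deriv: "\<And>y. (f has_derivative (\<lambda>h. g y \<bullet> h)) (at y)"
    and c_deriv: "\<And>y. (c has_derivative (\<lambda>h. J y *v h)) (at y)"
    and noise_f: "\<And>y. \<bar>ft y - f y\<bar> \<le> eps_f"
    and noise_c: "\<And>y. l1norm (ct y - c y) \<le> eps_c"
    and noise_g: "\<And>y. norm (gt y - g y) \<le> eps_g"
    and noise_J: "\<And>y. opnorm12 (Jt y - J y) \<le> eps_J"
    and sigma: "\<And>j. sigma_min (J (x j)) \<ge> gamma"
    and gamma_gt: "gamma > eps_J"
    and beta_pos: "\<And>j. beta j > 0"
    and d_feas: "\<And>j. ct (x j) + Jt (x j) *v d j = 0"
    and d_opt: "\<And>j e. ct (x j) + Jt (x j) *v e = 0 \<Longrightarrow>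
        1/2 * beta j * (norm (d j))\<^sup>2 + gt (x j) \<bullet> d j
          \<le> 1/2 * beta j * (norm e)\<^sup>2 + gt (x j) \<bullet> e"
    and tau: "0 < tau" "tau < 1"
    and pi_bound: "\<And>j. pi j \<ge> 1 / (1 - tau) *
        infnorm (matrix_inv (Jt (x j) ** transpose (Jt (x j))) *v (Jt (x j) *v gt (x j)))"
    and theta1: "0 \<le> theta1" "theta1 < 1"
    and cond: "(1 - theta1) * (1 / beta k * (g (x k) \<bullet> (Pmat (J (x k)) *v g (x k)))
                  + tau * pi k * l1norm (c (x k)))
        \<ge> (let xk = x k; \<beta> = beta k; \<pi> = pi k;
               \<delta> = 1 / (gamma - eps_J); \<eta> = 1 / gamma in
             1 / \<beta> * ((norm (g xk))\<^sup>2 * \<eta> * eps_J + eps_g * norm (g xk))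
             + eps_g * \<delta> * (l1norm (c xk) + eps_c)
             + \<pi> * ((2 - tau) * eps_c
                  + eps_J * (\<delta> * (l1norm (c xk) + eps_c)
                     + 1 / \<beta> * (norm (Pmat (J xk) *v g xk) + norm (g xk) * \<eta> * eps_J + eps_g))))"
  shows "g (x k) \<bullet> d k + pi k * l1norm (c (x k) + J (x k) *v d k) - pi k * l1norm (c (x k))
    \<le> - theta1 * (1 / beta k * (g (x k) \<bullet> (Pmat (J (x k)) *v g (x k)))
                  + tau * pi k * l1norm (c (x k)))"
proof -
  define xk where "xk = x k"
  define Jk where "Jk = J xk"
  define Jtk where "Jtk = Jt xk"
  define gk where "gk = g xk"
  define gtk where "gtk = gt xk"
  define ck where "ck = c xk"
  define ctk where "ctk = ct xk"
  define dk where "dk = d k"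
  define bk where "bk = beta k"
  define pk where "pk = pi k"
  have eJ0: "0 \<le> eps_J" by (rule opnorm_nonneg[OF noise_J])
  have gam: "gamma > 0" using eJ0 gamma_gt by linarith
  have eg0: "0 \<le> eps_g" using noise_g[of xk] norm_ge_zero order_trans by blast
  have bk0: "bk > 0" using beta_pos by (simp add: bk_def)
  have tau1: "0 < 1 - tau" using tau by simp
  have infl: "infnorm (matrix_inv (Jtk ** transpose Jtk) *v (Jtk *v gtk)) \<le> (1 - tau) * pk"
    using pi_bound[of k] tau1 by (simp add: Jtk_def gtk_def pk_def xk_def field_simps)
  have "0 \<le> (1 - tau) * pk" using infl infnorm_pos_le order_trans by blast
  then have pk0: "0 \<le> pk" using tau1 by (simp add: zero_le_mult_iff)
  have F1: "l1norm ((Jtk - Jk) *v v) \<le> eps_J * norm v" for v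
    using opnorm_bound[OF noise_J] by (simp add: Jtk_def Jk_def)
  have F1': "l1norm ((Jk - Jtk) *v v) \<le> eps_J * norm v" for v
  proof -
    have "(Jk - Jtk) *v v = - ((Jtk - Jk) *v v)" by (simp add: matrix_vector_mult_diff_rdistrib)
    then show ?thesis using F1[of v] by (simp add: l1_minus)
  qed
  have Fn: "norm ((Jk - Jtk) *v v) \<le> eps_J * norm v" for v
    using F1'[of v] norm_le_l1[of "(Jk - Jtk) *v v"] by linarith
  have Ftr: "norm (transpose (Jk - Jtk) *v y) \<le> eps_J * norm y" for y
    by (rule tr_bound[OF Fn eJ0])
  have sJ: "gamma * norm y \<le> norm (transpose Jk *v y)" for y
    using sigma_bound[OF sigma] by (simp add: Jk_def xk_def)
  have sJt: "(gamma - eps_J) * norm y \<le> norm (transpose Jtk *v y)" for y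
  proof -
    have "transpose Jtk *v y = transpose Jk *v y - transpose (Jk - Jtk) *v y"
      by (simp add: transpose_diff matrix_vector_mult_diff_rdistrib)
    then have "norm (transpose Jk *v y) \<le> norm (transpose Jtk *v y) + norm (transpose (Jk - Jtk) *v y)"
      by (metis diff_add_cancel norm_triangle_ineq)
    then show ?thesis using sJ[of y] Ftr[of y] by (simp add: algebra_simps)
  qed
  have ge: "gamma - eps_J > 0" using gamma_gt by simp
  have invJ: "invertible (Jk ** transpose Jk)" by (rule lower_invertible[OF sJ gam])
  have invJt: "invertible (Jtk ** transpose Jtk)" by (rule lower_invertible[OF sJt ge])
  have s1: "eps_J / gamma < 1" using gam gamma_gt by simp
  have HL: "gk \<bullet> prj Jk gk - gk \<bullet> prj Jtk gk \<le> (eps_J / gamma) * (norm gk)\<^sup>2"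
    by (rule proj_perturb[OF gam sJ invJ invJt Fn eJ0 s1])
  define Mt where "Mt = Jtk ** transpose Jtk"
  define Mti where "Mti = matrix_inv Mt"
  define u where "u = transpose Jtk *v (Mti *v ctk)"
  define lam where "lam = Mti *v (Jtk *v gtk)"
  define pt where "pt = prj Jtk gtk"
  have Ju: "Jtk *v u = ctk"
    unfolding u_def Mti_def Mt_def by (metis inv_app[OF invJt] matrix_vector_mul_assoc)
  define d0 where "d0 = - u - (1 / bk) *\<^sub>R pt"
  have Jd0: "Jtk *v d0 = - ctk"
    by (simp add: d0_def matrix_vector_mult_diff_distrib vec.neg matrix_vector_mult_scaleR Ju pt_def prj_A[OF invJt])
  have Jdk: "Jtk *v dk = - ctk"
    using d_feas[of k] by (simp add: Jtk_def ctk_def dk_def xk_def eq_neg_iff_add_eq_0 add.commute)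
  have stat_dk: "(bk *\<^sub>R dk + gtk) \<bullet> e = 0" if "Jtk *v e = 0" for e
  proof (rule stationary[OF bk0])
    fix t :: real
    have "ct (x k) + Jt (x k) *v (dk + t *\<^sub>R e) = 0"
      using Jdk that by (simp add: matrix_vector_right_distrib matrix_vector_mult_scaleR Jtk_def ctk_def xk_def)
    from d_opt[OF this] show "1/2 * bk * (norm dk)\<^sup>2 + gtk \<bullet> dk \<le> 1/2 * bk * (norm (dk + t *\<^sub>R e))\<^sup>2 + gtk \<bullet> (dk + t *\<^sub>R e)"
      by (simp add: bk_def dk_def gtk_def xk_def)
  qed
  have stat_d0: "(bk *\<^sub>R d0 + gtk) \<bullet> e = 0" if "Jtk *v e = 0" for e
  proof -
    have "gtk - pt = transpose Jtk *v lam"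
      using prj_decomp[of gtk Jtk] by (simp add: pt_def lam_def Mti_def Mt_def algebra_simps)
    then have "bk *\<^sub>R d0 + gtk = - (bk *\<^sub>R u) + transpose Jtk *v lam"
      using bk0 by (simp add: d0_def algebra_simps)
    moreover have "u \<bullet> e = 0" unfolding u_def by (simp add: dot_lmul_matrix that)
    moreover have "(transpose Jtk *v lam) \<bullet> e = 0" by (simp add: dot_lmul_matrix that)
    ultimately show ?thesis by (simp add: inner_add_left inner_diff_left)
  qed
  have dk_eq: "dk = d0"
  proof -
    define q where "q = dk - d0"
    have Jq: "Jtk *v q = 0" by (simp add: q_def matrix_vector_mult_diff_distrib Jdk Jd0)
    have "(bk *\<^sub>R dk + gtk) \<bullet> q - (bk *\<^sub>R d0 + gtk) \<bullet> q = 0"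
      using stat_dk[OF Jq] stat_d0[OF Jq] by simp
    then have "bk * (q \<bullet> q) = 0" by (simp add: q_def inner_diff_left inner_add_left algebra_simps)
    then have "q = 0" using bk0 by simp
    then show ?thesis by (simp add: q_def)
  qed
  have l1ct: "l1norm ctk \<le> l1norm ck + eps_c"
  proof -
    have "l1norm ctk \<le> l1norm ck + l1norm (ctk - ck)" using l1_add[of ck "ctk - ck"] by simp
    then show ?thesis using noise_c[of xk] by (simp add: ctk_def ck_def)
  qed
  have gu: "gtk \<bullet> u = lam \<bullet> ctk"
  proof -
    have "gtk \<bullet> u = (Jtk *v gtk) \<bullet> (Mti *v ctk)" unfolding u_def by (rule tr_dot2)
    also have "Jtk *v gtk = Mt *v lam" unfolding lam_def Mti_def Mt_def by (rule inv_app[OF invJt, symmetric])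
    also have "(Mt *v lam) \<bullet> (Mti *v ctk) = lam \<bullet> (transpose Mt *v (Mti *v ctk))" by (rule tr_dot2[symmetric])
    also have "transpose Mt = Mt" unfolding Mt_def by (rule transpose_sym_prod)
    also have "Mt *v (Mti *v ctk) = ctk" unfolding Mti_def Mt_def by (rule inv_app[OF invJt])
    finally show ?thesis .
  qed
  have A1: "- (gtk \<bullet> u) \<le> (1 - tau) * pk * (l1norm ck + eps_c)"
  proof -
    have "- (gtk \<bullet> u) \<le> infnorm lam * l1norm ctk" using gu dot_infnorm[of lam ctk] by linarith
    also have "\<dots> \<le> ((1 - tau) * pk) * (l1norm ck + eps_c)"
      using infl l1ct pk0 tau1 by (intro mult_mono) (simp_all add: lam_def Mti_def Mt_def infnorm_pos_le l1_nonneg)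
    finally show ?thesis .
  qed
  have nu: "norm u \<le> (1 / (gamma - eps_J)) * (l1norm ck + eps_c)"
  proof -
    have "(gamma - eps_J) * norm u \<le> norm ctk"
      unfolding u_def by (rule range_bound[OF sJt ge]) (use Ju in \<open>simp add: u_def\<close>)
    also have "\<dots> \<le> l1norm ck + eps_c" using norm_le_l1[of ctk] l1ct by linarith
    finally show ?thesis using ge by (simp add: field_simps)
  qed
  have A2: "(gtk - gk) \<bullet> u \<le> eps_g * (1 / (gamma - eps_J)) * (l1norm ck + eps_c)"
  proof -
    have "(gtk - gk) \<bullet> u \<le> norm (gtk - gk) * norm u" by (rule norm_cauchy_schwarz)
    also have "\<dots> \<le> eps_g * ((1 / (gamma - eps_J)) * (l1norm ck + eps_c))"
      using noise_g[of xk] nu eg0 by (intro mult_mono) (simp_all add: gtk_def gk_def)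
    finally show ?thesis by (simp add: mult.assoc)
  qed
  have P5: "gk \<bullet> pt \<ge> gk \<bullet> prj Jtk gk - eps_g * norm gk"
  proof -
    have "gk \<bullet> pt - gk \<bullet> prj Jtk gk = gk \<bullet> prj Jtk (gtk - gk)"
      by (simp add: pt_def prj_diff inner_diff_right)
    also have "\<dots> \<ge> - (norm gk * norm (prj Jtk (gtk - gk)))"
      using norm_cauchy_schwarz[of "-gk" "prj Jtk (gtk - gk)"] by simp
    moreover have "norm gk * norm (prj Jtk (gtk - gk)) \<le> norm gk * eps_g"
      using prj_le[OF invJt, of "gtk - gk"] noise_g[of xk]
      by (intro mult_left_mono) (simp_all add: gtk_def gk_def)
    ultimately show ?thesis by (simp add: algebra_simps)
  qed
  have A3: "- (1 / bk) * (gk \<bullet> pt) \<le> - (1 / bk) * (gk \<bullet> prj Jk gk) + (1 / bk) * ((norm gk)\<^sup>2 * (1 / gamma) * eps_J + eps_g * norm gk)"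
  proof -
    have "gk \<bullet> prj Jk gk - ((norm gk)\<^sup>2 * (1 / gamma) * eps_J + eps_g * norm gk) \<le> gk \<bullet> pt"
      using P5 HL by (simp add: algebra_simps)
    then have "(1 / bk) * (gk \<bullet> prj Jk gk - ((norm gk)\<^sup>2 * (1 / gamma) * eps_J + eps_g * norm gk)) \<le> (1 / bk) * (gk \<bullet> pt)"
      using bk0 by (intro mult_left_mono) simp_all
    then show ?thesis by (simp add: algebra_simps)
  qed
  have npt: "norm pt \<le> norm (prj Jk gk) + norm gk * (1 / gamma) * eps_J + eps_g"
  proof -
    define y0 where "y0 = matrix_inv (Jk ** transpose Jk) *v (Jk *v gk)"
    have gdec: "gk = prj Jk gk + transpose Jk *v y0" unfolding y0_def by (rule prj_decomp)
    have "(norm gk)\<^sup>2 = (norm (prj Jk gk))\<^sup>2 + (norm (transpose Jk *v y0))\<^sup>2"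
      unfolding y0_def by (rule prj_pyth[OF invJ])
    then have "(norm (transpose Jk *v y0))\<^sup>2 \<le> (norm gk)\<^sup>2" by simp
    then have "norm (transpose Jk *v y0) \<le> norm gk" by (meson norm_ge_zero power2_le_imp_le)
    then have "gamma * norm y0 \<le> norm gk" using sJ[of y0] by linarith
    then have ny0: "norm y0 \<le> norm gk * (1 / gamma)" using gam by (simp add: field_simps)
    have "transpose Jk *v y0 = transpose Jtk *v y0 + transpose (Jk - Jtk) *v y0"
      by (simp add: transpose_diff matrix_vector_mult_diff_rdistrib)
    then have "prj Jtk (transpose Jk *v y0) = prj Jtk (transpose Jtk *v y0) + prj Jtk (transpose (Jk - Jtk) *v y0)"
      by (metis prj_add)
    also have "prj Jtk (transpose Jtk *v y0) = 0" by (rule prj_tr[OF invJt])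
    finally have "prj Jtk (transpose Jk *v y0) = prj Jtk (transpose (Jk - Jtk) *v y0)" by simp
    then have "norm (prj Jtk (transpose Jk *v y0)) \<le> eps_J * norm y0"
      using prj_le[OF invJt, of "transpose (Jk - Jtk) *v y0"] Ftr[of y0] by simp
    also have "\<dots> \<le> eps_J * (norm gk * (1 / gamma))" using ny0 eJ0 by (rule mult_left_mono)
    finally have n2: "norm (prj Jtk (transpose Jk *v y0)) \<le> norm gk * (1 / gamma) * eps_J" by (simp add: mult.commute)
    have n1: "norm (prj Jtk (prj Jk gk)) \<le> norm (prj Jk gk)" by (rule prj_le[OF invJt])
    have n3: "norm (prj Jtk (gtk - gk)) \<le> eps_g"
      using prj_le[OF invJt, of "gtk - gk"] noise_g[of xk] by (simp add: gtk_def gk_def)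
    have "pt = prj Jtk (gk + (gtk - gk))" by (simp add: pt_def)
    also have "\<dots> = prj Jtk gk + prj Jtk (gtk - gk)" by (rule prj_add)
    also have "prj Jtk gk = prj Jtk (prj Jk gk) + prj Jtk (transpose Jk *v y0)"
      by (subst gdec, rule prj_add)
    finally have pte: "pt = prj Jtk (prj Jk gk) + prj Jtk (transpose Jk *v y0) + prj Jtk (gtk - gk)" .
    have "norm pt \<le> norm (prj Jtk (prj Jk gk)) + norm (prj Jtk (transpose Jk *v y0)) + norm (prj Jtk (gtk - gk))"
      unfolding pte
      using norm_triangle_ineq[of "prj Jtk (prj Jk gk) + prj Jtk (transpose Jk *v y0)" "prj Jtk (gtk - gk)"]
        norm_triangle_ineq[of "prj Jtk (prj Jk gk)" "prj Jtk (transpose Jk *v y0)"] by linarith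
    then show ?thesis using n1 n2 n3 by linarith
  qed
  have ndk: "norm dk \<le> (1 / (gamma - eps_J)) * (l1norm ck + eps_c) + 1 / bk * (norm (prj Jk gk) + norm gk * (1 / gamma) * eps_J + eps_g)"
  proof -
    have "norm dk \<le> norm u + norm ((1 / bk) *\<^sub>R pt)"
      unfolding dk_eq d0_def by (metis norm_minus_cancel norm_triangle_ineq4 diff_conv_add_uminus)
    also have "norm ((1 / bk) *\<^sub>R pt) = 1 / bk * norm pt" using bk0 by simp
    also have "1 / bk * norm pt \<le> 1 / bk * (norm (prj Jk gk) + norm gk * (1 / gamma) * eps_J + eps_g)"
      using npt bk0 by (intro mult_left_mono) simp_all
    finally show ?thesis using nu by linarith
  qed
  have A4: "pk * l1norm (ck + Jk *v dk) \<le> pk * (eps_c + eps_J * ((1 / (gamma - eps_J)) * (l1norm ck + eps_c) + 1 / bk * (norm (prj Jk gk) + norm gk * (1 / gamma) * eps_J + eps_g)))"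
  proof -
    have "ck + Jk *v dk = (ck - ctk) + (Jk - Jtk) *v dk"
      using Jdk by (simp add: matrix_vector_mult_diff_rdistrib)
    then have "l1norm (ck + Jk *v dk) \<le> l1norm (ck - ctk) + l1norm ((Jk - Jtk) *v dk)"
      by (metis l1_add)
    also have "\<dots> \<le> eps_c + eps_J * norm dk"
      using noise_c[of xk] F1'[of dk] l1_commute[of ck ctk] by (simp add: ck_def ctk_def)
    also have "\<dots> \<le> eps_c + eps_J * ((1 / (gamma - eps_J)) * (l1norm ck + eps_c) + 1 / bk * (norm (prj Jk gk) + norm gk * (1 / gamma) * eps_J + eps_g))"
      using ndk eJ0 by (simp add: mult_left_mono)
    finally show ?thesis using pk0 by (simp add: mult_left_mono)
  qed
  have gd: "gk \<bullet> dk = - (gtk \<bullet> u) + (gtk - gk) \<bullet> u - (1 / bk) * (gk \<bullet> pt)"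
    by (simp add: dk_eq d0_def inner_diff_right inner_diff_left inner_minus_right)
  define T where "T = 1 / bk * (gk \<bullet> prj Jk gk) + tau * pk * l1norm ck"
  define X where "X = (1 / (gamma - eps_J)) * (l1norm ck + eps_c) + 1 / bk * (norm (prj Jk gk) + norm gk * (1 / gamma) * eps_J + eps_g)"
  define E where "E = 1 / bk * ((norm gk)\<^sup>2 * (1 / gamma) * eps_J + eps_g * norm gk)
             + eps_g * (1 / (gamma - eps_J)) * (l1norm ck + eps_c)
             + pk * ((2 - tau) * eps_c + eps_J * X)"
  have idE: "(1 - tau) * pk * (l1norm ck + eps_c) + pk * (eps_c + eps_J * X) - pk * l1norm ck
      = pk * ((2 - tau) * eps_c + eps_J * X) - tau * pk * l1norm ck"
    by (simp add: algebra_simps)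
  have main: "gk \<bullet> dk + pk * l1norm (ck + Jk *v dk) - pk * l1norm ck \<le> - T + E"
    using gd A1 A2 A3 A4[folded X_def] idE unfolding T_def E_def by (simp add: algebra_simps)
  have condk: "(1 - theta1) * T \<ge> E"
    using cond unfolding Let_def T_def E_def X_def
    by (simp add: Pmat_prj xk_def Jk_def gk_def ck_def bk_def pk_def)
  have "gk \<bullet> dk + pk * l1norm (ck + Jk *v dk) - pk * l1norm ck \<le> - theta1 * T"
    using main condk by (simp add: algebra_simps)
  then show ?thesis
    by (simp add: T_def Pmat_prj xk_def Jk_def gk_def ck_def bk_def pk_def dk_def)
qed


end
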